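(* Let $\rho$ be a type-I elliptic isometry of $\mathbb{H}^4$ with twisting plane $P$. Then a plane $Q$ of $\mathbb{H}^4$ is orthogonal to $P$ through a line (i.e. $Q\cap P$ is a line and $Q$ meets $P$ orthogonally along it) if and only if $\partial Q\in\mathcal{K}_\rho$.
   Context: A type-I elliptic isometry of $\mathbb{H}^4$ is a composition of reflections in two distinct hyperplanes meeting in a plane; its fixed-point set, a plane, is its twisting plane $P$. The permuted pencil $\mathcal{F}_\rho$ is the set of boundaries at infinity of hyperplanes containing $P$. The invariant pencil $\mathcal{T}_\rho$ is the set of boundaries of hyperplanes orthogonal to $P$. The half-turn bank is $\mathcal{K}_\rho=\{s\cap t: s\in\mathcal{F}_\rho,\ t\in\mathcal{T}_\rho\}$, a set of subsets of $\partial\mathbb{H}^4$. *)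

theory Defs
  imports "HOL-Analysis.Analysis"
begin

text \<open>Hyperboloid model of hyperbolic 4-space in Minkowski space R^{4,1}, realised as
  real^5 with coordinate 0 timelike.\<close>

definition mink :: "real^5 \<Rightarrow> real^5 \<Rightarrow> real" where
  "mink x y = inner x y - 2 * (x $ 0) * (y $ 0)"

definition hyp :: "(real^5) set" where
  "hyp = {x. mink x x = -1 \<and> x $ 0 > 0}"

definition tg_subspace :: "nat \<Rightarrow> (real^5) set \<Rightarrow> bool" where
  "tg_subspace k S \<longleftrightarrow> (\<exists>V. subspace V \<and> dim V = k + 1 \<and> S = hyp \<inter> V) \<and> S \<noteq> {}"

abbreviation hline :: "(real^5) set \<Rightarrow> bool" where "hline \<equiv> tg_subspace 1"
abbreviation hplane :: "(real^5) set \<Rightarrow> bool" where "hplane \<equiv> tg_subspace 2"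
abbreviation hhyperplane :: "(real^5) set \<Rightarrow> bool" where "hhyperplane \<equiv> tg_subspace 3"

text \<open>Boundary at infinity: via radial projection to the Klein model (affine chart x0 = 1);
  the sphere at infinity is the null set in that chart.\<close>
definition ideal_sphere :: "(real^5) set" where
  "ideal_sphere = {y. y $ 0 = 1 \<and> mink y y = 0}"

definition klein_proj :: "real^5 \<Rightarrow> real^5" where
  "klein_proj x = (1 / (x $ 0)) *\<^sub>R x"

definition bd :: "(real^5) set \<Rightarrow> (real^5) set" where
  "bd S = closure (klein_proj ` S) \<inter> ideal_sphere"

text \<open>Reflection in a hyperplane H (Minkowski normal vector, well defined up to scaling).\<close>
definition normal_of :: "(real^5) set \<Rightarrow> real^5" where
  "normal_of H = (SOME n. n \<noteq> 0 \<and> (\<forall>v\<in>span H. mink n v = 0))"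

definition hrefl :: "(real^5) set \<Rightarrow> real^5 \<Rightarrow> real^5" where
  "hrefl H x = (let n = normal_of H in x - (2 * mink x n / mink n n) *\<^sub>R n)"

definition type_I_elliptic :: "(real^5 \<Rightarrow> real^5) \<Rightarrow> bool" where
  "type_I_elliptic \<rho> \<longleftrightarrow>
     (\<exists>H1 H2. hhyperplane H1 \<and> hhyperplane H2 \<and> H1 \<noteq> H2 \<and> hplane (H1 \<inter> H2) \<and>
        (\<forall>x\<in>hyp. \<rho> x = hrefl H1 (hrefl H2 x)))"

definition twisting_plane :: "(real^5 \<Rightarrow> real^5) \<Rightarrow> (real^5) set" where
  "twisting_plane \<rho> = {x \<in> hyp. \<rho> x = x}"

definition orth_hyperplane_plane :: "(real^5) set \<Rightarrow> (real^5) set \<Rightarrow> bool" where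
  "orth_hyperplane_plane t P \<longleftrightarrow> hhyperplane t \<and> hplane P \<and>
     (\<forall>n. (\<forall>v\<in>span t. mink n v = 0) \<longrightarrow> n \<in> span P)"

definition permuted_pencil :: "(real^5 \<Rightarrow> real^5) \<Rightarrow> (real^5) set set" where
  "permuted_pencil \<rho> = {bd s | s. hhyperplane s \<and> twisting_plane \<rho> \<subseteq> s}"

definition invariant_pencil :: "(real^5 \<Rightarrow> real^5) \<Rightarrow> (real^5) set set" where
  "invariant_pencil \<rho> = {bd t | t. orth_hyperplane_plane t (twisting_plane \<rho>)}"

definition half_turn_bank :: "(real^5 \<Rightarrow> real^5) \<Rightarrow> (real^5) set set" where
  "half_turn_bank \<rho> = {s \<inter> t | s t. s \<in> permuted_pencil \<rho> \<and> t \<in> invariant_pencil \<rho>}"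

definition orth_through_line :: "(real^5) set \<Rightarrow> (real^5) set \<Rightarrow> bool" where
  "orth_through_line Q P \<longleftrightarrow> hline (Q \<inter> P) \<and>
     (\<forall>u\<in>span Q. \<forall>v\<in>span P. (\<forall>w\<in>span (Q \<inter> P). mink u w = 0) \<longrightarrow>
         (\<forall>w\<in>span (Q \<inter> P). mink v w = 0) \<longrightarrow> mink u v = 0)"

end

theory Submission
  imports Defs
begin

definition Jm :: "real^5 \<Rightarrow> real^5" where
  "Jm x = x - (2 * x $ 0) *\<^sub>R axis 0 1"

lemma mink_Jm: "mink x y = inner (Jm x) y"
  unfolding mink_def Jm_def by (simp add: inner_diff_left inner_axis' algebra_simps)

lemma Jm_Jm[simp]: "Jm (Jm x) = x"
  unfolding Jm_def by (vector axis_def)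

lemma linear_Jm: "linear Jm"
  unfolding Jm_def by (intro linearI) (auto simp: algebra_simps)

lemma mink_comm: "mink x y = mink y x"
  unfolding mink_def by (simp add: inner_commute)

lemma mink_add_left: "mink (x + y) z = mink x z + mink y z"
  unfolding mink_def by (simp add: inner_add_left algebra_simps)
lemma mink_add_right: "mink z (x + y) = mink z x + mink z y"
  unfolding mink_def by (simp add: inner_add_right algebra_simps)
lemma mink_diff_left: "mink (x - y) z = mink x z - mink y z"
  unfolding mink_def by (simp add: inner_diff_left algebra_simps)
lemma mink_diff_right: "mink z (x - y) = mink z x - mink z y"
  unfolding mink_def by (simp add: inner_diff_right algebra_simps)
lemma mink_scale_left: "mink (c *\<^sub>R x) z = c * mink x z"
  unfolding mink_def by (simp add: algebra_simps)
lemma mink_scale_right: "mink z (c *\<^sub>R x) = c * mink z x"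
  unfolding mink_def by (simp add: algebra_simps)
lemma mink_neg_left: "mink (- x) z = - mink x z"
  unfolding mink_def by (simp add: algebra_simps)
lemma mink_neg_right: "mink z (- x) = - mink z x"
  unfolding mink_def by (simp add: algebra_simps)
lemma mink_zero[simp]: "mink 0 z = 0" "mink z 0 = 0"
  unfolding mink_def by auto

lemmas mink_simps = mink_add_left mink_add_right mink_diff_left mink_diff_right
  mink_scale_left mink_scale_right mink_neg_left mink_neg_right

definition morth :: "(real^5) set \<Rightarrow> (real^5) set" where
  "morth V = {x. \<forall>v\<in>V. mink x v = 0}"

lemma morth_eq: "morth V = Jm ` (orthogonal_comp V)"
proof -
  have "x \<in> morth V \<longleftrightarrow> Jm x \<in> orthogonal_comp V" for x
    unfolding morth_def orthogonal_comp_def orthogonal_def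
    by (auto simp: mink_Jm inner_commute)
  then show ?thesis by (auto simp: image_iff) (metis Jm_Jm)
qed

lemma subspace_morth: "subspace (morth V)"
  unfolding subspace_def morth_def by (auto simp: mink_simps)

lemma dim_orth_comp: assumes "subspace (V::(real^5) set)"
  shows "dim (orthogonal_comp V) + dim V = 5"
proof -
  have "dim {x + y |x y. x \<in> V \<and> y \<in> orthogonal_comp V} + dim (V \<inter> orthogonal_comp V) = dim V + dim (orthogonal_comp V)"
    by (rule dim_sums_Int[OF assms subspace_orthogonal_comp])
  moreover have "{x + y |x y. x \<in> V \<and> y \<in> orthogonal_comp V} = UNIV"
    using subspace_sum_orthogonal_comp[OF assms] unfolding set_plus_def by blast
  moreover have "V \<inter> orthogonal_comp V = {0}" by (rule orthogonal_Int_0[OF assms])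
  ultimately show ?thesis by simp
qed

lemma dim_morth: assumes "subspace V" shows "dim (morth V) + dim V = 5"
proof -
  have "dim (Jm ` orthogonal_comp V) = dim (orthogonal_comp V)"
    by (rule dim_image_eq[OF linear_Jm]) (metis Jm_Jm inj_on_inverseI)
  then show ?thesis using dim_orth_comp[OF assms] morth_eq by simp
qed

lemma morth_morth: assumes "subspace V" shows "morth (morth V) = V"
proof -
  have "V \<subseteq> morth (morth V)" unfolding morth_def by (auto simp: mink_comm)
  moreover have "dim (morth (morth V)) = dim V"
    using dim_morth[OF assms] dim_morth[OF subspace_morth, of V] by simp
  ultimately show ?thesis
    by (metis assms subspace_dim_equal subspace_morth order_refl)
qed

lemma mink_self_zero0: "x $ 0 = 0 \<Longrightarrow> mink x x = norm x ^ 2"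
  unfolding mink_def by (simp add: power2_norm_eq_inner)

lemma timelike_x0: "mink w w < 0 \<Longrightarrow> w $ 0 \<noteq> 0"
  using mink_self_zero0[of w] by force

lemma orth_timelike_spacelike:
  assumes "mink w w < 0" "mink w x = 0" "x \<noteq> 0"
  shows "mink x x > 0"
proof (rule ccontr)
  assume "\<not> mink x x > 0"
  hence xx: "mink x x \<le> 0" by simp
  define z where "z = (x $ 0) *\<^sub>R w - (w $ 0) *\<^sub>R x"
  have z0: "z $ 0 = 0" unfolding z_def by simp
  have "mink z z = (x$0)^2 * mink w w - 2 * (x$0) * (w$0) * mink w x + (w$0)^2 * mink x x"
    unfolding z_def by (simp add: mink_simps mink_comm[of x w] power2_eq_square algebra_simps)
  also have "\<dots> \<le> 0" using assms xx
    by (simp add: add_nonpos_nonpos mult_nonneg_nonpos mult_nonpos_nonneg)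
  finally have "mink z z \<le> 0" .
  hence "z = 0" using mink_self_zero0[OF z0] by simp
  hence "(w $ 0) *\<^sub>R x = (x $ 0) *\<^sub>R w" unfolding z_def by simp
  hence xw: "x = (x $ 0 / w $ 0) *\<^sub>R w" using timelike_x0[OF assms(1)]
    by (metis (no_types, lifting) divide_inverse_commute scaleR_scaleR vector_scaleR_component
        field_class.field_inverse scaleR_one mult.commute)
  have "mink w x = (x $ 0 / w $ 0) * mink w w" by (subst xw) (simp add: mink_simps)
  hence "x $ 0 = 0" using assms timelike_x0[OF assms(1)] by simp
  hence "x = 0" using xw by simp
  thus False using assms by simp
qed

lemma timelike_normalize:
  assumes "mink x x < 0"
  shows "(1 / sqrt (- mink x x)) *\<^sub>R x \<in> hyp \<or> (- 1 / sqrt (- mink x x)) *\<^sub>R x \<in> hyp"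
proof -
  have x0: "x $ 0 \<noteq> 0" by (rule timelike_x0[OF assms])
  have s: "sqrt (- mink x x) > 0" using assms by simp
  have sq: "(sqrt (- mink x x))^2 = - mink x x" using assms by simp
  have n: "mink (c *\<^sub>R x) (c *\<^sub>R x) = -1" if "c^2 = 1 / (- mink x x)" for c
    using that assms by (simp add: mink_simps power2_eq_square field_simps)
  have c1: "(1 / sqrt (- mink x x))^2 = 1 / (- mink x x)" and c2: "(- 1 / sqrt (- mink x x))^2 = 1 / (- mink x x)"
    using sq by (simp_all add: power_divide)
  show ?thesis
  proof (cases "x $ 0 > 0")
    case True then show ?thesis using n[OF c1] s unfolding hyp_def by auto
  next
    case False then have "x $ 0 < 0" using x0 by simp
    then show ?thesis using n[OF c2] s unfolding hyp_def by (auto simp: divide_simps)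
  qed
qed

lemma timelike_in_span:
  assumes "subspace V" "x \<in> V" "mink x x < 0"
  shows "x \<in> span (hyp \<inter> V)"
proof -
  have s: "sqrt (- mink x x) > 0" using assms by simp
  have sc: "c *\<^sub>R x \<in> V" for c using assms subspace_scale by blast
  from timelike_normalize[OF assms(3)] show ?thesis
  proof
    assume h: "(1 / sqrt (- mink x x)) *\<^sub>R x \<in> hyp"
    hence "(1 / sqrt (- mink x x)) *\<^sub>R x \<in> span (hyp \<inter> V)" using sc by (intro span_base) auto
    hence "sqrt (- mink x x) *\<^sub>R ((1 / sqrt (- mink x x)) *\<^sub>R x) \<in> span (hyp \<inter> V)"
      by (rule span_mul)
    thus ?thesis using s by simp
  next
    assume h: "(- 1 / sqrt (- mink x x)) *\<^sub>R x \<in> hyp"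
    hence "(- 1 / sqrt (- mink x x)) *\<^sub>R x \<in> span (hyp \<inter> V)" by (intro span_base IntI h sc)
    hence "(- sqrt (- mink x x)) *\<^sub>R ((- 1 / sqrt (- mink x x)) *\<^sub>R x) \<in> span (hyp \<inter> V)"
      by (rule span_mul)
    thus ?thesis using s by simp
  qed
qed

lemma span_hyp_Int:
  assumes "subspace V" "p \<in> hyp \<inter> V"
  shows "span (hyp \<inter> V) = V"
proof
  show "span (hyp \<inter> V) \<subseteq> V" using assms(1) by (simp add: span_minimal)
  show "V \<subseteq> span (hyp \<inter> V)"
  proof
    fix v assume v: "v \<in> V"
    have pp: "mink p p = -1" and pV: "p \<in> V" using assms unfolding hyp_def by auto
    define m where "m = mink p v"
    define s where "s = 1 / (2 * \<bar>m\<bar> + \<bar>mink v v\<bar> + 1)"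
    have s0: "s > 0" and s1: "s \<le> 1" unfolding s_def by (auto simp: divide_simps)
    have "\<bar>2 * s * m + s^2 * mink v v\<bar> \<le> 2 * s * \<bar>m\<bar> + s * \<bar>mink v v\<bar>"
    proof -
      have "\<bar>2 * s * m + s^2 * mink v v\<bar> \<le> 2 * s * \<bar>m\<bar> + s^2 * \<bar>mink v v\<bar>"
        using s0 by (simp add: abs_mult abs_triangle_ineq[THEN order_trans])
      also have "s^2 * \<bar>mink v v\<bar> \<le> s * \<bar>mink v v\<bar>"
        using s0 s1 by (simp add: power2_eq_square mult_right_mono)
      finally show ?thesis by simp
    qed
    also have "\<dots> = s * (2 * \<bar>m\<bar> + \<bar>mink v v\<bar>)" by (simp add: algebra_simps)
    also have "\<dots> < 1"
    proof -
      have pos: "2 * \<bar>m\<bar> + \<bar>mink v v\<bar> + 1 > 0" by simp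
      thus ?thesis unfolding s_def by (simp add: field_simps)
    qed
    finally have lt: "\<bar>2 * s * m + s^2 * mink v v\<bar> < 1" .
    have "mink (p + s *\<^sub>R v) (p + s *\<^sub>R v) = -1 + (2 * s * m + s^2 * mink v v)"
      unfolding m_def using pp by (simp add: mink_simps mink_comm[of v p] power2_eq_square algebra_simps)
    hence neg: "mink (p + s *\<^sub>R v) (p + s *\<^sub>R v) < 0" using lt by linarith
    have "p + s *\<^sub>R v \<in> V" using assms(1) pV v by (simp add: subspace_add subspace_scale)
    hence a: "p + s *\<^sub>R v \<in> span (hyp \<inter> V)" using timelike_in_span[OF assms(1) _ neg] by simp
    have b: "p \<in> span (hyp \<inter> V)" using assms by (intro span_base) auto
    have "(1/s) *\<^sub>R ((p + s *\<^sub>R v) - p) \<in> span (hyp \<inter> V)"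
      using a b by (intro span_mul span_diff)
    thus "v \<in> span (hyp \<inter> V)" using s0 by simp
  qed
qed


definition sp :: "real^5 \<Rightarrow> real^5" where "sp x = x - (x $ 0) *\<^sub>R axis 0 1"

lemma mink_sp: "mink x z = inner (sp x) (sp z) - x $ 0 * z $ 0"
  unfolding mink_def sp_def by (simp add: inner_diff_left inner_diff_right inner_axis inner_axis' inner_commute algebra_simps)

lemma null_timelike_neg:
  assumes "y \<in> ideal_sphere" "q $ 0 = 1" "mink q q < 0"
  shows "mink y q < 0"
proof -
  have y0: "y $ 0 = 1" and yy: "mink y y = 0" using assms unfolding ideal_sphere_def by auto
  have "norm (sp y) ^ 2 = 1" using mink_sp[of y y] y0 yy by (simp add: power2_norm_eq_inner)
  hence ny: "norm (sp y) = 1" using norm_ge_zero[of "sp y"] by (auto simp: power2_eq_1_iff)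
  have "norm (sp q) ^ 2 < 1" using mink_sp[of q q] assms by (simp add: power2_norm_eq_inner)
  hence nq: "norm (sp q) < 1" using norm_ge_zero[of "sp q"] by (metis abs_of_nonneg abs_square_less_1)
  have "inner (sp y) (sp q) \<le> norm (sp y) * norm (sp q)" by (rule norm_cauchy_schwarz)
  thus ?thesis using mink_sp[of y q] ny nq y0 assms by simp
qed

lemma bd_hyp_Int:
  assumes V: "subspace V" and p: "p \<in> hyp \<inter> V"
  shows "bd (hyp \<inter> V) = V \<inter> ideal_sphere"
proof
  have "klein_proj ` (hyp \<inter> V) \<subseteq> V" unfolding klein_proj_def using V by (auto simp: subspace_scale)
  hence "closure (klein_proj ` (hyp \<inter> V)) \<subseteq> V" using closed_subspace[OF V] by (simp add: closure_minimal)
  thus "bd (hyp \<inter> V) \<subseteq> V \<inter> ideal_sphere" unfolding bd_def by auto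
next
  show "V \<inter> ideal_sphere \<subseteq> bd (hyp \<inter> V)"
  proof
    fix y assume yI: "y \<in> V \<inter> ideal_sphere"
    have y0: "y $ 0 = 1" and yy: "mink y y = 0" using yI unfolding ideal_sphere_def by auto
    have p0: "p $ 0 > 0" and pp: "mink p p = -1" and pV: "p \<in> V" using p unfolding hyp_def by auto
    define q where "q = klein_proj p"
    have q0: "q $ 0 = 1" unfolding q_def klein_proj_def using p0 by simp
    have qq: "mink q q < 0" unfolding q_def klein_proj_def using p0 pp by (simp add: mink_simps)
    have qV: "q \<in> V" unfolding q_def klein_proj_def using pV V by (simp add: subspace_scale)
    have yq: "mink y q < 0" using null_timelike_neg yI q0 qq by blast
    have inK: "(1 - t) *\<^sub>R y + t *\<^sub>R q \<in> klein_proj ` (hyp \<inter> V)" if t: "0 < t" "t \<le> 1" for t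
    proof -
      define z where "z = (1 - t) *\<^sub>R y + t *\<^sub>R q"
      have z0: "z $ 0 = 1" unfolding z_def using y0 q0 by (simp add: algebra_simps)
      have "mink z z = 2 * t * (1 - t) * mink y q + t^2 * mink q q"
        unfolding z_def using yy by (simp add: mink_simps mink_comm[of q y] power2_eq_square algebra_simps)
      also have "\<dots> < 0"
      proof -
        have "2 * t * (1 - t) * mink y q \<le> 0" using t yq by (simp add: mult_nonneg_nonpos)
        moreover have "t^2 * mink q q < 0" using t qq by (simp add: mult_pos_neg)
        ultimately show ?thesis by linarith
      qed
      finally have zz: "mink z z < 0" .
      have zV: "z \<in> V" unfolding z_def using V yI qV by (simp add: subspace_add subspace_scale)
      have sq: "sqrt (- mink z z) > 0" using zz by simp
      have "\<exists>c. c \<noteq> 0 \<and> c *\<^sub>R z \<in> hyp"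
      proof (rule disjE[OF timelike_normalize[OF zz]])
        assume "(1 / sqrt (- mink z z)) *\<^sub>R z \<in> hyp" thus ?thesis using sq by (intro exI[of _ "1 / sqrt (- mink z z)"]) simp
      next
        assume "(- 1 / sqrt (- mink z z)) *\<^sub>R z \<in> hyp" thus ?thesis using sq by (intro exI[of _ "- 1 / sqrt (- mink z z)"]) simp
      qed
      then obtain c where c: "c \<noteq> 0" "c *\<^sub>R z \<in> hyp" by blast
      have "klein_proj (c *\<^sub>R z) = z" unfolding klein_proj_def using c z0 by simp
      moreover have "c *\<^sub>R z \<in> hyp \<inter> V" using c zV V by (simp add: subspace_scale)
      ultimately show ?thesis unfolding z_def[symmetric] by (metis image_eqI)
    qed
    have "y \<in> closure (klein_proj ` (hyp \<inter> V))"
      unfolding closure_approachable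
    proof (intro allI impI)
      fix e :: real assume e: "e > 0"
      define t where "t = min 1 (e / (2 * (norm (q - y) + 1)))"
      have nn: "2 * (norm (q - y) + 1) > 0" by (smt (verit) norm_ge_zero)
      have t0: "t > 0" "t \<le> 1" unfolding t_def using e nn by auto
      have "dist ((1 - t) *\<^sub>R y + t *\<^sub>R q) y = t * norm (q - y)"
        unfolding dist_norm using t0
        by (simp add: algebra_simps flip: scaleR_diff_right)
      also have "\<dots> \<le> (e / (2 * (norm (q - y) + 1))) * norm (q - y)"
        unfolding t_def by (intro mult_right_mono) auto
      also have "\<dots> = e * (norm (q - y) / (2 * (norm (q - y) + 1)))" by simp
      also have "\<dots> < e * 1"
      proof (rule mult_strict_left_mono)
        show "norm (q - y) / (2 * (norm (q - y) + 1)) < 1"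
          using nn by (simp add: divide_simps)
      qed (use e in simp)
      finally show "\<exists>x\<in>klein_proj ` (hyp \<inter> V). dist x y < e" using inK[OF t0] by auto
    qed
    thus "y \<in> bd (hyp \<inter> V)" unfolding bd_def using yI by auto
  qed
qed


lemma null_in_span:
  assumes "subspace W" "z \<in> W" "mink z z = 0" "z \<noteq> 0"
  shows "z \<in> span (W \<inter> ideal_sphere)"
proof -
  have z0: "z $ 0 \<noteq> 0"
  proof
    assume "z $ 0 = 0" thus False using mink_self_zero0[of z] assms by simp
  qed
  have "(1 / z $ 0) *\<^sub>R z \<in> W \<inter> ideal_sphere"
    using assms z0 unfolding ideal_sphere_def by (simp add: subspace_scale mink_simps)
  hence "z $ 0 *\<^sub>R ((1 / z $ 0) *\<^sub>R z) \<in> span (W \<inter> ideal_sphere)" by (intro span_mul span_base)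
  thus ?thesis using z0 by simp
qed

lemma quad_root:
  fixes a b c r :: real
  assumes "a \<noteq> 0" "r^2 = b^2 - a * c"
  shows "c + 2 * ((-b + r)/a) * b + ((-b + r)/a)^2 * a = 0"
proof -
  define s where "s = (-b + r)/a"
  have "a * (c + 2 * s * b + s^2 * a) = a*c + 2*(r-b)*b + (r-b)^2"
    using assms(1) by (simp add: s_def field_simps power2_eq_square)
  also have "\<dots> = 0" using assms(2) by (simp add: power2_eq_square algebra_simps)
  finally show ?thesis using assms(1) unfolding s_def by simp
qed

lemma spacelike_in_span:
  assumes W: "subspace W" and p: "p \<in> W" "mink p p < 0" and v: "v \<in> W" "mink v v > 0"
  shows "v \<in> span (W \<inter> ideal_sphere) \<and> p \<in> span (W \<inter> ideal_sphere)"
proof -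
  define a where "a = mink v v"
  define b where "b = mink p v"
  define c where "c = mink p p"
  define r where "r = sqrt (b^2 - a * c)"
  have ac: "a * c < 0" unfolding a_def c_def using p v by (simp add: mult_pos_neg)
  have rpos: "r > 0" unfolding r_def using ac by (simp add: power2_eq_square) (smt (verit) zero_le_square)
  have r2: "r^2 = b^2 - a * c" and r2': "(-r)^2 = b^2 - a * c" unfolding r_def using ac
    by (simp_all add: power2_eq_square) (smt (verit) zero_le_square)+
  have a0: "a \<noteq> 0" unfolding a_def using v by simp
  define s1 where "s1 = (-b + r)/a"
  define s2 where "s2 = (-b + (-r))/a"
  have key: "p + s *\<^sub>R v \<in> span (W \<inter> ideal_sphere)" if s: "c + 2 * s * b + s^2 * a = 0" for s
  proof (rule null_in_span[OF W])
    show "p + s *\<^sub>R v \<in> W" using W p v by (simp add: subspace_add subspace_scale)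
    show "mink (p + s *\<^sub>R v) (p + s *\<^sub>R v) = 0"
      using s unfolding a_def b_def c_def by (simp add: mink_simps mink_comm[of v p] power2_eq_square algebra_simps)
    show "p + s *\<^sub>R v \<noteq> 0"
    proof
      assume "p + s *\<^sub>R v = 0"
      hence "p = (- s) *\<^sub>R v" by (simp add: eq_neg_iff_add_eq_0 add.commute)
      hence "mink p p = s^2 * mink v v" by (simp add: mink_simps power2_eq_square)
      thus False using p v by (smt (verit) zero_le_power2 mult_nonneg_nonneg)
    qed
  qed
  have k1: "p + s1 *\<^sub>R v \<in> span (W \<inter> ideal_sphere)"
    using key quad_root[OF a0 r2] unfolding s1_def by blast
  have k2: "p + s2 *\<^sub>R v \<in> span (W \<inter> ideal_sphere)"
    using key quad_root[OF a0 r2'] unfolding s2_def by blast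
  have d: "s1 - s2 \<noteq> 0" unfolding s1_def s2_def using rpos a0 by (simp add: divide_simps)
  have "(1 / (s1 - s2)) *\<^sub>R ((p + s1 *\<^sub>R v) - (p + s2 *\<^sub>R v)) \<in> span (W \<inter> ideal_sphere)"
    using k1 k2 by (intro span_mul span_diff)
  moreover have "(1 / (s1 - s2)) *\<^sub>R ((p + s1 *\<^sub>R v) - (p + s2 *\<^sub>R v)) = v"
    using d by (simp add: algebra_simps flip: scaleR_diff_left)
  ultimately have vs: "v \<in> span (W \<inter> ideal_sphere)" by simp
  have "(p + s1 *\<^sub>R v) - s1 *\<^sub>R v \<in> span (W \<inter> ideal_sphere)"
    using k1 vs by (intro span_diff span_mul)
  thus ?thesis using vs by simp
qed

lemma span_null:
  assumes W: "subspace W" and p: "p \<in> W" "mink p p < 0" and u: "u \<in> W" "u \<noteq> 0" "mink p u = 0"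
  shows "span (W \<inter> ideal_sphere) = W"
proof
  show "span (W \<inter> ideal_sphere) \<subseteq> W" using W by (simp add: span_minimal)
  have uu: "mink u u > 0" by (rule orth_timelike_spacelike[OF p(2) u(3) u(2)])
  have ps: "p \<in> span (W \<inter> ideal_sphere)" using spacelike_in_span[OF W p u(1) uu] by blast
  show "W \<subseteq> span (W \<inter> ideal_sphere)"
  proof
    fix v assume v: "v \<in> W"
    define a where "a = mink v p / mink p p"
    define w where "w = v - a *\<^sub>R p"
    have wW: "w \<in> W" unfolding w_def using W v p by (simp add: subspace_diff subspace_scale)
    have pw: "mink p w = 0" unfolding w_def a_def using p by (simp add: mink_simps mink_comm[of p v])
    have "w \<in> span (W \<inter> ideal_sphere)"
    proof (cases "w = 0")
      case True thus ?thesis by (simp add: span_zero)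
    next
      case False
      have "mink w w > 0" by (rule orth_timelike_spacelike[OF p(2) pw False])
      thus ?thesis using spacelike_in_span[OF W p wW] by blast
    qed
    hence "w + a *\<^sub>R p \<in> span (W \<inter> ideal_sphere)" using ps by (intro span_add span_mul)
    thus "v \<in> span (W \<inter> ideal_sphere)" unfolding w_def by simp
  qed
qed


lemma dim_le5: "dim (S :: (real^5) set) \<le> 5"
  using dim_subset_UNIV_cart[of S] by simp

lemma tg_char:
  assumes "tg_subspace k S"
  shows "subspace (span S)" "dim (span S) = k + 1" "S = hyp \<inter> span S" "S \<noteq> {}"
proof -
  obtain V where V: "subspace V" "dim V = k + 1" "S = hyp \<inter> V" and ne: "S \<noteq> {}"
    using assms unfolding tg_subspace_def by blast
  then obtain p where "p \<in> hyp \<inter> V" by blast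
  hence sp: "span S = V" using span_hyp_Int[OF V(1)] V(3) by simp
  show "subspace (span S)" "dim (span S) = k + 1" "S = hyp \<inter> span S" "S \<noteq> {}"
    using V sp ne by auto
qed

lemma mk_tg:
  assumes "subspace V" "dim V = k + 1" "p \<in> hyp \<inter> V"
  shows "tg_subspace k (hyp \<inter> V)"
  using assms unfolding tg_subspace_def by blast

lemma hyp_timelike: "p \<in> hyp \<Longrightarrow> mink p p = -1"
  unfolding hyp_def by simp

lemma morth_span: "morth (span S) = morth S"
proof
  show "morth (span S) \<subseteq> morth S" unfolding morth_def using span_superset by blast
  show "morth S \<subseteq> morth (span S)"
  proof
    fix x assume x: "x \<in> morth S"
    have sub: "subspace {v. mink x v = 0}" unfolding subspace_def by (auto simp: mink_simps)
    have "S \<subseteq> {v. mink x v = 0}" using x unfolding morth_def by auto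
    hence "span S \<subseteq> {v. mink x v = 0}" using span_minimal[OF _ sub] by blast
    thus "x \<in> morth (span S)" unfolding morth_def by auto
  qed
qed

lemma morth_single: "x \<in> morth {n} \<longleftrightarrow> mink x n = 0"
  unfolding morth_def by simp

lemma dim_morth_single: "n \<noteq> 0 \<Longrightarrow> dim (morth {n}) = 4"
  using dim_morth[of "span {n}"] by (simp add: morth_span)

lemma dim_Int_lower:
  assumes "subspace A" "subspace (B::(real^5) set)"
  shows "dim A + dim B \<le> dim (A \<inter> B) + 5"
  using dim_sums_Int[OF assms] dim_le5[of "{x + y |x y. x \<in> A \<and> y \<in> B}"] by linarith

lemma exists_nonzero:
  assumes "dim (A::(real^5) set) \<ge> 1" shows "\<exists>x\<in>A. x \<noteq> 0"
  using assms dim_eq_0[of A] by (metis not_one_le_zero subset_singletonD subsetI singletonI)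

lemma dim_lt:
  assumes "subspace A" "subspace (B::(real^5) set)" "A \<subseteq> B" "x \<in> B" "x \<notin> A"
  shows "dim A < dim B"
proof -
  have sA: "span A = A" using assms(1) by (rule span_eq_iff[THEN iffD2])
  have sB: "span B = B" using assms(2) by (rule span_eq_iff[THEN iffD2])
  have "span A \<subset> span B" unfolding sA sB using assms by auto
  thus ?thesis by (rule dim_psubset)
qed

lemma subspace_eq_dim:
  assumes "subspace A" "subspace (B::(real^5) set)" "A \<subseteq> B" "dim B \<le> dim A"
  shows "A = B"
  using subspace_dim_equal[OF assms] .

lemma hyperplane_normal:
  assumes "hhyperplane H"
  defines "n \<equiv> normal_of H"
  shows "n \<noteq> 0" "n \<in> morth (span H)" "mink n n > 0" "morth {n} = span H"
proof -
  have sub: "subspace (span H)" and d: "dim (span H) = 4" and HH: "H = hyp \<inter> span H" and ne: "H \<noteq> {}"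
    using tg_char[OF assms(1)] by auto
  have dm: "dim (morth (span H)) = 1" using dim_morth[OF sub] d by simp
  obtain m where m: "m \<in> morth (span H)" "m \<noteq> 0" using exists_nonzero[of "morth (span H)"] dm by auto
  have ex: "\<exists>n. n \<noteq> 0 \<and> (\<forall>v\<in>span H. mink n v = 0)" using m unfolding morth_def by auto
  have "n \<noteq> 0 \<and> (\<forall>v\<in>span H. mink n v = 0)" unfolding n_def normal_of_def by (rule someI_ex[OF ex])
  thus n0: "n \<noteq> 0" and nm: "n \<in> morth (span H)" unfolding morth_def by auto
  obtain p where p: "p \<in> H" using ne by auto
  have "mink p n = 0" using nm p span_superset[of H] unfolding morth_def by (auto simp: mink_comm)
  moreover have ph: "p \<in> hyp" using p HH by blast
  ultimately show "mink n n > 0" using orth_timelike_spacelike[of p n] hyp_timelike[OF ph] n0 by simp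
  have "span {n} = morth (span H)"
    using subspace_eq_dim[of "span {n}" "morth (span H)"] nm n0 dm subspace_morth
    by (simp add: span_minimal)
  hence "morth {n} = morth (morth (span H))" by (metis morth_span)
  thus "morth {n} = span H" using morth_morth[OF sub] by simp
qed

lemma hrefl_fix: "hhyperplane H \<Longrightarrow> x \<in> H \<Longrightarrow> hrefl H x = x"
proof -
  assume H: "hhyperplane H" and x: "x \<in> H"
  have "x \<in> morth {normal_of H}" using hyperplane_normal(4)[OF H] x span_superset by blast
  thus ?thesis unfolding hrefl_def Let_def using morth_single by simp
qed

lemma type_I_plane:
  assumes "type_I_elliptic \<rho>"
  shows "hplane (twisting_plane \<rho>)"
proof -
  obtain H1 H2 where H: "hhyperplane H1" "hhyperplane H2" "H1 \<noteq> H2" "hplane (H1 \<inter> H2)"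
    and rho: "\<forall>x\<in>hyp. \<rho> x = hrefl H1 (hrefl H2 x)"
    using assms unfolding type_I_elliptic_def by blast
  define n1 where "n1 = normal_of H1"
  define n2 where "n2 = normal_of H2"
  note N1 = hyperplane_normal[OF H(1), folded n1_def]
  note N2 = hyperplane_normal[OF H(2), folded n2_def]
  have HH1: "H1 = hyp \<inter> span H1" and HH2: "H2 = hyp \<inter> span H2" using tg_char H by auto
  have "twisting_plane \<rho> = H1 \<inter> H2"
  proof
    show "H1 \<inter> H2 \<subseteq> twisting_plane \<rho>"
    proof
      fix x assume x: "x \<in> H1 \<inter> H2"
      hence xh: "x \<in> hyp" using HH1 by blast
      have "\<rho> x = x" using rho xh hrefl_fix[OF H(1)] hrefl_fix[OF H(2)] x by simp
      thus "x \<in> twisting_plane \<rho>" unfolding twisting_plane_def using xh by simp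
    qed
    show "twisting_plane \<rho> \<subseteq> H1 \<inter> H2"
    proof
      fix x assume "x \<in> twisting_plane \<rho>"
      hence xh: "x \<in> hyp" and fx: "hrefl H1 (hrefl H2 x) = x" unfolding twisting_plane_def using rho by auto
      define c2 where "c2 = 2 * mink x n2 / mink n2 n2"
      define y where "y = x - c2 *\<^sub>R n2"
      define c1 where "c1 = 2 * mink y n1 / mink n1 n1"
      have "hrefl H2 x = y" unfolding hrefl_def y_def c2_def n2_def Let_def by simp
      moreover have "hrefl H1 y = y - c1 *\<^sub>R n1" unfolding hrefl_def c1_def n1_def Let_def by simp
      ultimately have e: "x - c2 *\<^sub>R n2 - c1 *\<^sub>R n1 = x" using fx unfolding y_def by simp
      have "c2 *\<^sub>R n2 + c1 *\<^sub>R n1 = x - (x - c2 *\<^sub>R n2 - c1 *\<^sub>R n1)" by (simp add: algebra_simps)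
      also have "\<dots> = 0" by (subst e) simp
      finally have eq: "c2 *\<^sub>R n2 + c1 *\<^sub>R n1 = 0" .
      have c20: "c2 = 0"
      proof (rule ccontr)
        assume c2: "c2 \<noteq> 0"
        define k where "k = - c1 / c2"
        have e2: "c2 *\<^sub>R n2 = - (c1 *\<^sub>R n1)" using eq by (simp add: eq_neg_iff_add_eq_0)
        have "n2 = (1 / c2) *\<^sub>R (c2 *\<^sub>R n2)" using c2 by simp
        also have "\<dots> = k *\<^sub>R n1" unfolding e2 k_def by simp
        finally have n2k: "n2 = k *\<^sub>R n1" .
        have k0: "k \<noteq> 0" using n2k N2(1) by auto
        have "morth {n2} = morth {n1}" using k0 n2k by (auto simp: morth_single mink_simps)
        hence "span H1 = span H2" using N1(4) N2(4) by simp
        thus False using HH1 HH2 H(3) by simp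
      qed
      have "mink x n2 = 0" using c20 N2(3) unfolding c2_def by simp
      hence x2: "x \<in> H2" using N2(4) HH2 xh morth_single by auto
      have "c1 *\<^sub>R n1 = 0" using eq c20 by simp
      hence "c1 = 0" using N1(1) by simp
      hence "mink x n1 = 0" using N1(3) c20 unfolding c1_def y_def by simp
      hence x1: "x \<in> H1" using N1(4) HH1 xh morth_single by auto
      show "x \<in> H1 \<inter> H2" using x1 x2 by simp
    qed
  qed
  thus ?thesis using H(4) by simp
qed


lemma span_null_tg:
  assumes "tg_subspace k S" "k \<ge> 1"
  shows "span (span S \<inter> ideal_sphere) = span S"
proof -
  note T = tg_char[OF assms(1)]
  obtain p where p: "p \<in> S" using T(4) by auto
  have ph: "p \<in> hyp" and pS: "p \<in> span S" using p T(3) by auto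
  have p0: "p \<noteq> 0" using ph unfolding hyp_def by auto
  have "dim (morth {p}) + dim (span S) \<le> dim (morth {p} \<inter> span S) + 5"
    by (rule dim_Int_lower[OF subspace_morth T(1)])
  hence "dim (morth {p} \<inter> span S) \<ge> 1" using dim_morth_single[OF p0] T(2) assms(2) by linarith
  then obtain u where u: "u \<in> morth {p} \<inter> span S" "u \<noteq> 0" using exists_nonzero by blast
  have pu: "mink p u = 0" using u morth_single mink_comm by auto
  show ?thesis by (rule span_null[OF T(1) pS]) (use hyp_timelike[OF ph] u pu in auto)
qed

lemma bd_tg: "tg_subspace k S \<Longrightarrow> bd S = span S \<inter> ideal_sphere"
  using tg_char[of k S] bd_hyp_Int[of "span S"] by (metis ex_in_conv)

lemma main_equiv:
  assumes P: "hplane P" and Q: "hplane Q"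
  shows "orth_through_line Q P \<longleftrightarrow>
    (\<exists>s t. hhyperplane s \<and> P \<subseteq> s \<and> orth_hyperplane_plane t P \<and> bd Q = bd s \<inter> bd t)"
proof -
  define VP where "VP = span P"
  define VQ where "VQ = span Q"
  define L where "L = VQ \<inter> VP"
  have subP: "subspace VP" and dP: "dim VP = 3" and PP: "P = hyp \<inter> VP" and neP: "P \<noteq> {}"
    using tg_char[OF P] unfolding VP_def by auto
  have subQ: "subspace VQ" and dQ: "dim VQ = 3" and QQ: "Q = hyp \<inter> VQ" and neQ: "Q \<noteq> {}"
    using tg_char[OF Q] unfolding VQ_def by auto
  have subL: "subspace L" unfolding L_def using subP subQ by (rule subspace_inter[rotated])
  have QP: "Q \<inter> P = hyp \<inter> L" unfolding L_def using PP QQ by blast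
  have bdQ: "bd Q = VQ \<inter> ideal_sphere" unfolding VQ_def by (rule bd_tg[OF Q])
  show ?thesis
  proof
    assume otl: "orth_through_line Q P"
    have hl: "hline (Q \<inter> P)" and orth: "\<forall>u\<in>span Q. \<forall>v\<in>span P. (\<forall>w\<in>span (Q \<inter> P). mink u w = 0) \<longrightarrow>
         (\<forall>w\<in>span (Q \<inter> P). mink v w = 0) \<longrightarrow> mink u v = 0"
      using otl unfolding orth_through_line_def by auto
    obtain p0 where p0: "p0 \<in> hyp \<inter> L" using tg_char(4)[OF hl] QP by auto
    have spanL: "span (Q \<inter> P) = L" using QP span_hyp_Int[OF subL p0] by simp
    have dL: "dim L = 2" using tg_char(2)[OF hl] spanL by simp
    have p0L: "p0 \<in> L" and p0t: "mink p0 p0 < 0" using p0 hyp_timelike by auto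
    define VS where "VS = {x + y |x y. x \<in> VQ \<and> y \<in> VP}"
    have subS: "subspace VS" unfolding VS_def using subspace_sums[OF subQ subP] .
    have dS: "dim VS = 4" using dim_sums_Int[OF subQ subP] dP dQ dL unfolding VS_def L_def by simp
    have VPS: "VP \<subseteq> VS" unfolding VS_def using subspace_0[OF subQ] by force
    have VQS: "VQ \<subseteq> VS" unfolding VS_def using subspace_0[OF subP] by force
    define s where "s = hyp \<inter> VS"
    have hs: "hhyperplane s" unfolding s_def
      by (rule mk_tg[OF subS, of 3 p0]) (use dS p0 VPS L_def in auto)
    have Ps: "P \<subseteq> s" unfolding s_def using PP VPS by auto
    have "dim (morth L) = 3" using dim_morth[OF subL] dL by simp
    hence "dim (morth L \<inter> VP) \<ge> 1" using dim_Int_lower[OF subspace_morth subP, of L] dP by linarith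
    then obtain n where nm: "n \<in> morth L" and nP: "n \<in> VP" and n0: "n \<noteq> 0"
      using exists_nonzero by blast
    have nL: "\<forall>w\<in>L. mink n w = 0" using nm unfolding morth_def by auto
    have p0n: "mink p0 n = 0" using nL p0L mink_comm by metis
    have nn: "mink n n > 0" by (rule orth_timelike_spacelike[OF p0t p0n n0])
    define VT where "VT = morth {n}"
    have subT: "subspace VT" unfolding VT_def by (rule subspace_morth)
    have dT: "dim VT = 4" unfolding VT_def by (rule dim_morth_single[OF n0])
    have p0T: "p0 \<in> VT" unfolding VT_def using p0n morth_single by simp
    define t where "t = hyp \<inter> VT"
    have ht: "hhyperplane t" unfolding t_def by (rule mk_tg[OF subT, of 3 p0]) (use dT p0 p0T in auto)
    have spanT: "span t = VT" unfolding t_def using span_hyp_Int[OF subT, of p0] p0 p0T by auto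
    have ot: "orth_hyperplane_plane t P"
      unfolding orth_hyperplane_plane_def
    proof (intro conjI allI impI ht P)
      fix m assume "\<forall>v\<in>span t. mink m v = 0"
      hence "m \<in> morth VT" unfolding morth_def spanT by auto
      also have "morth VT = span {n}" unfolding VT_def
        using morth_morth[of "span {n}"] by (simp add: morth_span)
      also have "span {n} \<subseteq> VP" using nP subP by (simp add: span_minimal)
      finally show "m \<in> span P" unfolding VP_def .
    qed
    define M where "M = VQ \<inter> morth L"
    have subM: "subspace M" unfolding M_def by (rule subspace_inter[OF subQ subspace_morth])
    have "dim M \<ge> 1" using dim_Int_lower[OF subQ subspace_morth, of L] dQ dim_morth[OF subL] dL
      unfolding M_def by linarith
    have LM0: "L \<inter> M \<subseteq> {0}"
    proof
      fix l assume l: "l \<in> L \<inter> M"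
      hence lm: "l \<in> morth L" unfolding M_def by auto
      have ll: "mink l l = 0" using lm l unfolding morth_def by auto
      have "mink p0 l = 0" using lm p0L unfolding morth_def by (auto simp: mink_comm)
      hence "l = 0" using orth_timelike_spacelike[OF p0t] ll by fastforce
      thus "l \<in> {0}" by simp
    qed
    have "dim {x + y |x y. x \<in> L \<and> y \<in> M} + dim (L \<inter> M) = dim L + dim M"
      by (rule dim_sums_Int[OF subL subM])
    moreover have "dim (L \<inter> M) = 0" using LM0 by simp
    ultimately have dLM: "dim {x + y |x y. x \<in> L \<and> y \<in> M} \<ge> 3" using dL \<open>dim M \<ge> 1\<close> by linarith
    have LMQ: "{x + y |x y. x \<in> L \<and> y \<in> M} \<subseteq> VQ"
      unfolding L_def M_def using subQ by (auto intro: subspace_add)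
    have "{x + y |x y. x \<in> L \<and> y \<in> M} = VQ"
      by (rule subspace_eq_dim[OF subspace_sums[OF subL subM] subQ LMQ]) (use dLM dQ in simp)
    moreover have "{x + y |x y. x \<in> L \<and> y \<in> M} \<subseteq> VT"
    proof clarify
      fix x y assume x: "x \<in> L" and y: "y \<in> M"
      have "mink x n = 0" using nL x mink_comm by metis
      moreover have "mink y n = 0"
      proof -
        have yQ: "y \<in> span Q" and yL: "\<forall>w\<in>span (Q \<inter> P). mink y w = 0"
          using y spanL unfolding M_def VQ_def morth_def by auto
        have "\<forall>w\<in>span (Q \<inter> P). mink n w = 0" using nL spanL by simp
        thus ?thesis using orth yQ yL nP unfolding VP_def by blast
      qed
      ultimately show "x + y \<in> VT" unfolding VT_def morth_single by (simp add: mink_simps)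
    qed
    ultimately have QT: "VQ \<subseteq> VT" by simp
    have nT: "n \<notin> VT" unfolding VT_def morth_single using nn by simp
    have "dim (VS \<inter> VT) < dim VS"
      by (rule dim_lt[OF subspace_inter[OF subS subT] subS _ _, of n]) (use VPS nP nT in auto)
    hence "VQ = VS \<inter> VT"
      using subspace_eq_dim[OF subQ subspace_inter[OF subS subT]] VQS QT dS dQ by simp
    moreover have "bd s = VS \<inter> ideal_sphere" unfolding s_def
      by (rule bd_hyp_Int[OF subS, of p0]) (use p0 VPS L_def in auto)
    moreover have "bd t = VT \<inter> ideal_sphere" unfolding t_def
      by (rule bd_hyp_Int[OF subT, of p0]) (use p0 p0T in auto)
    ultimately have "bd Q = bd s \<inter> bd t" using bdQ by auto
    thus "\<exists>s t. hhyperplane s \<and> P \<subseteq> s \<and> orth_hyperplane_plane t P \<and> bd Q = bd s \<inter> bd t"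
      using hs Ps ot by blast
  next
    assume "\<exists>s t. hhyperplane s \<and> P \<subseteq> s \<and> orth_hyperplane_plane t P \<and> bd Q = bd s \<inter> bd t"
    then obtain s t where hs: "hhyperplane s" and Ps: "P \<subseteq> s" and ot: "orth_hyperplane_plane t P"
      and eqbd: "bd Q = bd s \<inter> bd t" by blast
    have ht: "hhyperplane t" and otn: "\<forall>n. (\<forall>v\<in>span t. mink n v = 0) \<longrightarrow> n \<in> span P"
      using ot unfolding orth_hyperplane_plane_def by auto
    define VS where "VS = span s"
    define VT where "VT = span t"
    have subS: "subspace VS" and dS: "dim VS = 4" and SS: "s = hyp \<inter> VS"
      using tg_char[OF hs] unfolding VS_def by auto
    have subT: "subspace VT" and dT: "dim VT = 4" and TT: "t = hyp \<inter> VT" and neT: "t \<noteq> {}"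
      using tg_char[OF ht] unfolding VT_def by auto
    have "VQ \<inter> ideal_sphere \<subseteq> VS \<inter> VT"
      using eqbd bdQ bd_tg[OF hs] bd_tg[OF ht] unfolding VS_def VT_def by auto
    hence "span (VQ \<inter> ideal_sphere) \<subseteq> VS \<inter> VT"
      using span_minimal subspace_inter[OF subS subT] by blast
    hence QST: "VQ \<subseteq> VS \<inter> VT" using span_null_tg[OF Q] unfolding VQ_def by simp
    have "dim (morth VT) = 1" using dim_morth[OF subT] dT by simp
    then obtain n where nm: "n \<in> morth VT" and n0: "n \<noteq> 0" using exists_nonzero[of "morth VT"] by auto
    have nP: "n \<in> VP" using otn nm unfolding morth_def VT_def VP_def by auto
    have VPS: "VP \<subseteq> VS" unfolding VP_def VS_def using Ps by (rule span_mono)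
    obtain pt where pt: "pt \<in> hyp" "pt \<in> VT" using neT TT by auto
    have "mink pt n = 0" using nm pt unfolding morth_def by (auto simp: mink_comm)
    hence nn: "mink n n > 0" using orth_timelike_spacelike[OF _ _ n0, of pt] hyp_timelike[OF pt(1)] by simp
    have nT: "n \<notin> VT" using nm nn unfolding morth_def by auto
    have "dim (VS \<inter> VT) < dim VS"
      by (rule dim_lt[OF subspace_inter[OF subS subT] subS _ _, of n]) (use VPS nP nT in auto)
    hence VQST: "VQ = VS \<inter> VT"
      using subspace_eq_dim[OF subQ subspace_inter[OF subS subT]] QST dS dQ by simp
    have VTn: "VT = morth {n}"
    proof (rule subspace_eq_dim[OF subT subspace_morth])
      show "VT \<subseteq> morth {n}" using nm unfolding morth_def by (auto simp: mink_comm)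
      show "dim (morth {n}) \<le> dim VT" using dim_morth_single[OF n0] dT by simp
    qed
    have LT: "L = VT \<inter> VP" unfolding L_def VQST using VPS by auto
    obtain p where p: "p \<in> hyp" "p \<in> VP" using neP PP by auto
    define a where "a = mink p n / mink n n"
    define p' where "p' = p - a *\<^sub>R n"
    have p'n: "mink p' n = 0" unfolding p'_def a_def using nn by (simp add: mink_simps)
    have p'L: "p' \<in> L" unfolding LT p'_def using p nP subP p'n VTn morth_single
      by (metis IntI p'_def subspace_diff subspace_scale)
    have "mink p' p' = mink p p - (mink p n)^2 / mink n n"
      unfolding p'_def a_def using nn
      by (simp add: mink_simps mink_comm[of n p] power2_eq_square field_simps)
    also have "\<dots> < 0" using hyp_timelike[OF p(1)] nn by (smt (verit) divide_nonneg_pos zero_le_power2)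
    finally have p't: "mink p' p' < 0" .
    have "\<exists>c. c *\<^sub>R p' \<in> hyp" using timelike_normalize[OF p't] by blast
    then obtain c where c: "c *\<^sub>R p' \<in> hyp" by blast
    have cL: "c *\<^sub>R p' \<in> hyp \<inter> L" using c p'L subL by (simp add: subspace_scale)
    have dL1: "dim L \<ge> 2" unfolding LT using dim_Int_lower[OF subT subP] dT dP by linarith
    have "dim L < dim VP"
      by (rule dim_lt[OF subL subP _ nP]) (use nT LT in auto)
    hence dL: "dim L = 2" using dL1 dP by simp
    have hl: "hline (Q \<inter> P)" unfolding QP by (rule mk_tg[OF subL _ cL]) (use dL in simp)
    have spanL: "span (Q \<inter> P) = L" using QP span_hyp_Int[OF subL cL] by simp
    have nL: "\<forall>w\<in>L. mink n w = 0" using VTn LT morth_single mink_comm by auto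
    show "orth_through_line Q P"
      unfolding orth_through_line_def
    proof (intro conjI hl ballI impI)
      fix u v assume u: "u \<in> span Q" and v: "v \<in> span P"
        and hu: "\<forall>w\<in>span (Q \<inter> P). mink u w = 0" and hv: "\<forall>w\<in>span (Q \<inter> P). mink v w = 0"
      have un: "mink u n = 0" using u QST VTn morth_single unfolding VQ_def by auto
      define b where "b = mink v n / mink n n"
      define v' where "v' = v - b *\<^sub>R n"
      have v'n: "mink v' n = 0" unfolding v'_def b_def using nn by (simp add: mink_simps)
      have v'L: "v' \<in> L" unfolding LT v'_def using v nP subP v'n VTn morth_single unfolding VP_def
        by (metis IntI v'_def subspace_diff subspace_scale subspace_span)
      have v'w: "mink v' w = 0" if "w \<in> L" for w
        using hv nL that spanL unfolding v'_def by (simp add: mink_simps)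
      have "v' = 0"
      proof (rule ccontr)
        assume "v' \<noteq> 0"
        moreover have "mink p' v' = 0" using v'w p'L mink_comm by metis
        ultimately have "mink v' v' > 0" using orth_timelike_spacelike[OF p't] by blast
        thus False using v'w v'L by simp
      qed
      hence "v = b *\<^sub>R n" unfolding v'_def by simp
      thus "mink u v = 0" using un by (simp add: mink_simps)
    qed
  qed
qed

theorem theorem5p6:
  fixes \<rho> :: "real^5 \<Rightarrow> real^5" and Q :: "(real^5) set"
  assumes "type_I_elliptic \<rho>"
    and "hplane Q"
  shows "orth_through_line Q (twisting_plane \<rho>) \<longleftrightarrow> bd Q \<in> half_turn_bank \<rho>"
proof -
  have P: "hplane (twisting_plane \<rho>)" by (rule type_I_plane[OF assms(1)])
  have "bd Q \<in> half_turn_bank \<rho> \<longleftrightarrow>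
    (\<exists>s t. hhyperplane s \<and> twisting_plane \<rho> \<subseteq> s \<and> orth_hyperplane_plane t (twisting_plane \<rho>) \<and> bd Q = bd s \<inter> bd t)"
    unfolding half_turn_bank_def permuted_pencil_def invariant_pencil_def by blast
  thus ?thesis using main_equiv[OF P assms(2)] by simp
qed

end
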